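(* Let $w$ be an infinite word on an alphabet $\mathcal{A}$ having infinitely many palindromic prefixes, and let $(n_i)_{i\ge1}$ be the increasing sequence of the lengths of its palindromic prefixes ($n_1=0$). The following are equivalent: (i) $n_{i+1}\le 2n_i+1$ for all $i\ge1$; (ii) there is an admissible function $\psi$ such that $w=w_\psi$.
   Context: The alphabet $\mathcal{A}$ (finite or infinite) is disjoint from $\mathbb{N}^*=\{1,2,\dots\}$; the empty word $\varepsilon$ is a palindrome. An admissible function is a map $\psi:\mathbb{N}^*\to\mathbb{N}^*\sqcup\mathcal{A}$ such that for every $n\ge1$ either $\psi(n)\in\mathcal{A}$ or $1\le\psi(n)\le n-1$. With it associate finite words $\pi_1=\varepsilon$ and, for $i\ge1$: if $\psi(i)\in\mathcal{A}$, $\pi_{i+1}=\pi_i\,\psi(i)\,\pi_i$; if $\psi(i)\in\mathbb{N}^*$, then $\pi_{\psi(i)}$ is a prefix of $\pi_i$, and writing $\pi_i=\pi_{\psi(i)}b_i$ one sets $\pi_{i+1}=\pi_i b_i$ (denoted $\pi_i\pi_{\psi(i)}^{-1}\pi_i$). Each $\pi_i$ is a palindrome and a proper prefix of $\pi_{i+1}$; $w_\psi$ denotes the infinite word having every $\pi_i$ as a prefix. *)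

theory Defs
  imports Main "HOL-Library.Infinite_Set"
begin

text \<open>The codomain N* disjoint-union A of an admissible function is modelled as nat + 'a:
  Inl k stands for the integer k, Inr a for the letter a. The value at 0 is irrelevant
  (the domain is N* = {1,2,...}).\<close>

definition admissible :: "(nat \<Rightarrow> nat + 'a) \<Rightarrow> bool" where
  "admissible \<psi> \<longleftrightarrow> (\<forall>n\<ge>1. case \<psi> n of Inr a \<Rightarrow> True | Inl k \<Rightarrow> 1 \<le> k \<and> k \<le> n - 1)"

text \<open>pal psi i is the word pi_i (for i >= 1). pi_{i+1} = pi_i (pi_{psi i})^{-1} pi_i is
  pi_i followed by the suffix b_i of pi_i with pi_i = pi_{psi i} b_i. The guard only matters for
  non-admissible psi.\<close>

function pal :: "(nat \<Rightarrow> nat + 'a) \<Rightarrow> nat \<Rightarrow> 'a list" where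
  "pal \<psi> 0 = []"
| "pal \<psi> (Suc 0) = []"
| "pal \<psi> (Suc (Suc i)) =
     (case \<psi> (Suc i) of
        Inr a \<Rightarrow> pal \<psi> (Suc i) @ [a] @ pal \<psi> (Suc i)
      | Inl k \<Rightarrow> (if 1 \<le> k \<and> k \<le> i
                  then pal \<psi> (Suc i) @ drop (length (pal \<psi> k)) (pal \<psi> (Suc i))
                  else pal \<psi> (Suc i)))"
  by pat_completeness auto
termination by (relation "measure (\<lambda>(\<psi>, n). n)") auto

text \<open>w_psi: the infinite word having every pi_i as a prefix.\<close>

definition w_psi :: "(nat \<Rightarrow> nat + 'a) \<Rightarrow> nat \<Rightarrow> 'a" where
  "w_psi \<psi> j = pal \<psi> (LEAST i. j < length (pal \<psi> i)) ! j"

definition pal_prefix :: "(nat \<Rightarrow> 'a) \<Rightarrow> nat \<Rightarrow> bool" where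
  "pal_prefix w n \<longleftrightarrow> (\<forall>j<n. w j = w (n - 1 - j))"

end

theory Submission
  imports Defs
begin

lemma pal_props:
  assumes adm: "admissible \<psi>"
  shows "rev (pal \<psi> m) = pal \<psi> m \<and> (\<forall>k\<le>m. \<exists>b. pal \<psi> m = pal \<psi> k @ b)
    \<and> (\<forall>k. 1 \<le> k \<and> k < m \<longrightarrow> length (pal \<psi> k) < length (pal \<psi> m))"
proof (induction m rule: less_induct)
  case (less m)
  consider "m = 0" | "m = Suc 0" | i where "m = Suc (Suc i)"
    by (metis not0_implies_Suc)
  then show ?case
  proof cases
    case 1 then show ?thesis by simp
  next
    case 2 then show ?thesis by (auto simp: le_Suc_eq)
  next
    case 3
    have IH: "rev (pal \<psi> (Suc i)) = pal \<psi> (Suc i)" "\<forall>k\<le>Suc i. \<exists>b. pal \<psi> (Suc i) = pal \<psi> k @ b"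
      "\<forall>k. 1 \<le> k \<and> k < Suc i \<longrightarrow> length (pal \<psi> k) < length (pal \<psi> (Suc i))"
      using less.IH[of "Suc i"] 3 by auto
    obtain c where eq: "pal \<psi> m = pal \<psi> (Suc i) @ c" and r: "rev (pal \<psi> m) = pal \<psi> m"
      and cne: "c \<noteq> []"
    proof (cases "\<psi> (Suc i)")
      case (Inr a)
      then have eq: "pal \<psi> m = pal \<psi> (Suc i) @ ([a] @ pal \<psi> (Suc i))" using 3 by simp
      have "rev (pal \<psi> m) = pal \<psi> m" using eq IH(1) by simp
      then show ?thesis using that eq by blast
    next
      case (Inl k0)
      have k0: "1 \<le> k0" "k0 \<le> i" using adm Inl unfolding admissible_def
        by (metis (no_types, lifting) Suc_eq_plus1 add_diff_cancel_right' le_add2 old.sum.simps(5))+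
      obtain c where c: "pal \<psi> (Suc i) = pal \<psi> k0 @ c" using IH(2) k0 le_SucI by blast
      have lt: "length (pal \<psi> k0) < length (pal \<psi> (Suc i))" using IH(3) k0 by auto
      have eq: "pal \<psi> m = pal \<psi> (Suc i) @ c" using 3 Inl k0 c by simp
      have cne: "c \<noteq> []" using lt c by auto
      have pk: "rev (pal \<psi> k0) = pal \<psi> k0" using less.IH[of k0] 3 k0 by auto
      have P: "pal \<psi> (Suc i) = rev c @ pal \<psi> k0"
        using IH(1) c pk by (metis rev_append)
      have "rev (pal \<psi> m) = rev c @ pal \<psi> (Suc i)" using eq IH(1) by simp
      also have "\<dots> = pal \<psi> m" using eq c P by simp
      finally show ?thesis using that eq cne by blast
    qed
    have p: "\<forall>k\<le>m. \<exists>b. pal \<psi> m = pal \<psi> k @ b"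
    proof (intro allI impI)
      fix k assume "k \<le> m"
      then consider "k = m" | "k \<le> Suc i" using 3 by linarith
      then show "\<exists>b. pal \<psi> m = pal \<psi> k @ b"
      proof cases
        case 1 then show ?thesis by auto
      next
        case 2 then obtain b where "pal \<psi> (Suc i) = pal \<psi> k @ b" using IH(2) by blast
        then show ?thesis using eq by auto
      qed
    qed
    have l: "\<forall>k. 1 \<le> k \<and> k < m \<longrightarrow> length (pal \<psi> k) < length (pal \<psi> m)"
    proof (intro allI impI)
      fix k assume "1 \<le> k \<and> k < m"
      then have "k \<le> Suc i" using 3 by auto
      then obtain b where "pal \<psi> (Suc i) = pal \<psi> k @ b" using IH(2) by blast
      then have "length (pal \<psi> k) \<le> length (pal \<psi> (Suc i))" by simp
      moreover have "length c > 0" using cne by (cases c) auto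
      moreover have "length (pal \<psi> m) = length (pal \<psi> (Suc i)) + length c" using eq by simp
      ultimately show "length (pal \<psi> k) < length (pal \<psi> m)" by linarith
    qed
    show ?thesis using r p l by blast
  qed
qed

lemma w_psi_nth:
  assumes adm: "admissible \<psi>" and j: "j < length (pal \<psi> m)"
  shows "w_psi \<psi> j = pal \<psi> m ! j"
proof -
  define i0 where "i0 = (LEAST i. j < length (pal \<psi> i))"
  have "i0 \<le> m" unfolding i0_def using j by (rule Least_le)
  moreover have j0: "j < length (pal \<psi> i0)" unfolding i0_def using j by (rule LeastI)
  ultimately obtain b where "pal \<psi> m = pal \<psi> i0 @ b" using pal_props[OF adm, of m] by blast
  then show ?thesis using j0 unfolding w_psi_def i0_def[symmetric] by (simp add: nth_append)
qed

lemma len_bound: "length (pal \<psi> (Suc (Suc i))) \<le> 2 * length (pal \<psi> (Suc i)) + 1"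
  by (auto split: sum.split)

lemma len_ge:
  assumes adm: "admissible \<psi>"
  shows "m \<le> length (pal \<psi> (Suc m))"
proof (induction m)
  case 0 then show ?case by simp
next
  case (Suc m)
  have "length (pal \<psi> (Suc m)) < length (pal \<psi> (Suc (Suc m)))"
    using pal_props[OF adm, of "Suc (Suc m)"] by (simp del: pal.simps)
  then show ?case using Suc by (simp del: pal.simps)
qed

lemma pal_prefix_pal:
  assumes adm: "admissible \<psi>"
  shows "pal_prefix (w_psi \<psi>) (length (pal \<psi> m))"
  unfolding pal_prefix_def
proof (intro allI impI)
  fix j assume j: "j < length (pal \<psi> m)"
  have r: "rev (pal \<psi> m) = pal \<psi> m" using pal_props[OF adm, of m] by blast
  have "w_psi \<psi> j = pal \<psi> m ! j" using w_psi_nth[OF adm j] .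
  also have "\<dots> = rev (pal \<psi> m) ! j" using r by simp
  also have "\<dots> = pal \<psi> m ! (length (pal \<psi> m) - 1 - j)" using j by (simp add: rev_nth)
  also have "\<dots> = w_psi \<psi> (length (pal \<psi> m) - 1 - j)" using w_psi_nth[OF adm, of _ m] j by simp
  finally show "w_psi \<psi> j = w_psi \<psi> (length (pal \<psi> m) - 1 - j)" .
qed

theorem theorem4p2:
  fixes w :: "nat \<Rightarrow> 'a"
  assumes "infinite {n. pal_prefix w n}"
  shows "(\<forall>i. enumerate {n. pal_prefix w n} (Suc i) \<le> 2 * enumerate {n. pal_prefix w n} i + 1)
     \<longleftrightarrow> (\<exists>\<psi> :: nat \<Rightarrow> nat + 'a. admissible \<psi> \<and> w = w_psi \<psi>)"
proof -
  let ?S = "{n. pal_prefix w n}"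
  define e where "e = enumerate ?S"
  have inS: "pal_prefix w (e m)" for m using enumerate_in_set[OF assms] unfolding e_def by blast
  have mono_iff: "e a < e b \<longleftrightarrow> a < b" for a b using assms unfolding e_def by simp
  have e0: "e 0 = 0"
  proof -
    have "0 \<in> ?S" by (simp add: pal_prefix_def)
    then obtain n where "e n = 0" using enumerate_Ex[OF assms] unfolding e_def by blast
    then show ?thesis using mono_iff[of n 0] by (cases n) auto
  qed
  {
    assume H: "\<forall>i. enumerate ?S (Suc i) \<le> 2 * enumerate ?S i + 1"
    have bnd: "e (Suc m) \<le> 2 * e m + 1" for m using H unfolding e_def by blast
    have stp: "e m < e (Suc m)" for m using mono_iff by simp
    have pal_e: "w x = w (e m - 1 - x)" if "x < e m" for x m using inS[of m] that
      unfolding pal_prefix_def by blast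
    have per: "w y = w (y + (e (Suc m) - e m))" if "y < e m" for y m
    proof -
      have "w (y + (e (Suc m) - e m)) = w (e (Suc m) - 1 - (y + (e (Suc m) - e m)))"
        using pal_e[of "y + (e (Suc m) - e m)" "Suc m"] that stp[of m] by simp
      also have "e (Suc m) - 1 - (y + (e (Suc m) - e m)) = e m - 1 - y" using that stp[of m] by simp
      finally show ?thesis using pal_e[OF that] by simp
    qed
    have Lin: "pal_prefix w (2 * e m - e (Suc m))" if "e (Suc m) \<noteq> 2 * e m + 1" for m
      unfolding pal_prefix_def
    proof (intro allI impI)
      fix x assume x: "x < 2 * e m - e (Suc m)"
      have le: "e (Suc m) \<le> 2 * e m" using bnd[of m] that by simp
      have "w x = w (e m - 1 - x)" using pal_e[of x m] x stp[of m] by simp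
      also have "\<dots> = w ((2 * e m - e (Suc m) - 1 - x) + (e (Suc m) - e m))"
        using x le stp[of m] by (simp add: algebra_simps)
      also have "\<dots> = w (2 * e m - e (Suc m) - 1 - x)"
        using per[of "2 * e m - e (Suc m) - 1 - x" m] x le stp[of m] by simp
      finally show "w x = w (2 * e m - e (Suc m) - 1 - x)" .
    qed
    define J where "J m = (SOME j. e j = 2 * e m - e (Suc m))" for m
    have J: "e (J m) = 2 * e m - e (Suc m)" "J m < m" if "e (Suc m) \<noteq> 2 * e m + 1" for m
    proof -
      have "2 * e m - e (Suc m) \<in> ?S" using Lin[OF that] by simp
      then have "\<exists>j. e j = 2 * e m - e (Suc m)" using enumerate_Ex[OF assms] unfolding e_def by blast
      then show J1: "e (J m) = 2 * e m - e (Suc m)" unfolding J_def by (rule someI_ex)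
      have "e (Suc m) \<le> 2 * e m" using bnd[of m] that by linarith
      then have "e (J m) < e m" using J1 stp[of m] by linarith
      then show "J m < m" using mono_iff by blast
    qed
    define \<psi> :: "nat \<Rightarrow> nat + 'a" where "\<psi> n = (if e n = 2 * e (n - 1) + 1 then Inr (w (e (n - 1)))
        else Inl (Suc (J (n - 1))))" for n
    have adm: "admissible \<psi>" unfolding admissible_def
    proof (intro allI impI)
      fix n :: nat assume "1 \<le> n"
      then obtain t where t: "n = Suc t" by (cases n) auto
      show "case \<psi> n of Inr a \<Rightarrow> True | Inl k \<Rightarrow> 1 \<le> k \<and> k \<le> n - 1"
        using J(2)[of t] unfolding \<psi>_def t by auto
    qed
    have palw: "pal \<psi> (Suc m) = map w [0..<e m]" for m
    proof (induction m rule: less_induct)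
      case (less m)
      show ?case
      proof (cases m)
        case 0 then show ?thesis using e0 by simp
      next
        case (Suc t)
        define M where "M = e t"
        define N where "N = e (Suc t)"
        have MN: "M < N" "N \<le> 2 * M + 1" unfolding M_def N_def using stp bnd by auto
        have IHt: "pal \<psi> (Suc t) = map w [0..<M]" using less.IH[of t] Suc M_def by simp
        have split: "map w [0..<N] = map w [0..<M] @ map w [M..<N]"
          using MN by (metis map_append le_add_diff_inverse less_imp_le upt_add_eq_append zero_le)
        show ?thesis
        proof (cases "N = 2 * M + 1")
          case True
          then have ps: "\<psi> (Suc t) = Inr (w M)" unfolding \<psi>_def M_def N_def by simp
          have "map w [M..<N] = [w M] @ map w [Suc M..<N]" using MN by (simp add: upt_conv_Cons)
          moreover have "map w [Suc M..<N] = map w [0..<M]"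
          proof (rule nth_equalityI)
            show "length (map w [Suc M..<N]) = length (map w [0..<M])" using True by simp
            fix x assume x: "x < length (map w [Suc M..<N])"
            then have x': "x < M" using True by (simp del: upt_Suc)
            have "w (Suc M + x) = w (N - 1 - (Suc M + x))"
              using pal_e[of "Suc M + x" "Suc t"] x' True unfolding N_def by simp
            also have "N - 1 - (Suc M + x) = M - 1 - x" using True x' by simp
            finally show "map w [Suc M..<N] ! x = map w [0..<M] ! x"
              using x' True pal_e[of x t] unfolding M_def by (simp del: upt_Suc)
          qed
          ultimately show ?thesis using ps IHt split Suc N_def by simp
        next
          case False
          have ne: "e (Suc t) \<noteq> 2 * e t + 1" using False unfolding M_def N_def .
          have ps: "\<psi> (Suc t) = Inl (Suc (J t))" unfolding \<psi>_def using ne by simp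
          have Jt: "e (J t) = 2 * M - N" "J t < t" using J[OF ne] unfolding M_def N_def by auto
          have IHJ: "pal \<psi> (Suc (J t)) = map w [0..<2 * M - N]" using less.IH[of "J t"] Jt Suc by simp
          have "pal \<psi> (Suc m) = map w [0..<M] @ drop (2 * M - N) (map w [0..<M])"
            using ps IHt IHJ Suc Jt by simp
          also have "drop (2 * M - N) (map w [0..<M]) = map w [2 * M - N..<M]"
            by (simp add: drop_map)
          also have "map w [2 * M - N..<M] = map w [M..<N]"
          proof (rule nth_equalityI)
            show "length (map w [2 * M - N..<M]) = length (map w [M..<N])" using MN False by simp
            fix x assume x: "x < length (map w [2 * M - N..<M])"
            then have x': "x < N - M" using MN False by simp
            have "w (2 * M - N + x) = w (2 * M - N + x + (N - M))"
              using per[of "2 * M - N + x" t] x' MN False unfolding M_def N_def by simp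
            also have "2 * M - N + x + (N - M) = M + x" using MN False x' by simp
            finally show "map w [2 * M - N..<M] ! x = map w [M..<N] ! x"
              using x' MN False by simp
          qed
          finally show ?thesis using split Suc N_def by simp
        qed
      qed
    qed
    have "w = w_psi \<psi>"
    proof
      fix j
      have "j < e (Suc j)" using le_enumerate[OF assms, of "Suc j"] unfolding e_def by simp
      then have jl: "j < length (pal \<psi> (Suc (Suc j)))" using palw[of "Suc j"] by (simp del: pal.simps)
      show "w j = w_psi \<psi> j"
        using w_psi_nth[OF adm jl] palw[of "Suc j"] \<open>j < e (Suc j)\<close> by (simp del: pal.simps)
    qed
    then have "\<exists>\<psi> :: nat \<Rightarrow> nat + 'a. admissible \<psi> \<and> w = w_psi \<psi>" using adm by blast
  } note D1 = this
  {
    assume "\<exists>\<psi> :: nat \<Rightarrow> nat + 'a. admissible \<psi> \<and> w = w_psi \<psi>"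
    then obtain \<psi> :: "nat \<Rightarrow> nat + 'a" where adm: "admissible \<psi>" and ww: "w = w_psi \<psi>" by blast
    have "\<forall>i. enumerate ?S (Suc i) \<le> 2 * enumerate ?S i + 1"
    proof
      fix i
      define a where "a = e i"
      have ex: "\<exists>m. a < length (pal \<psi> m)"
        using len_ge[OF adm, of "Suc a"] by (metis Suc_le_lessD)
      define m0 where "m0 = (LEAST m. a < length (pal \<psi> m))"
      have m0: "a < length (pal \<psi> m0)" unfolding m0_def using ex by (rule LeastI_ex)
      have m0min: "\<not> a < length (pal \<psi> m)" if "m < m0" for m
        using not_less_Least[of m "\<lambda>m. a < length (pal \<psi> m)"] that unfolding m0_def by blast
      have m01: "m0 \<noteq> 0" "m0 \<noteq> Suc 0"
      proof -
        show "m0 \<noteq> 0" proof assume "m0 = 0" then show False using m0 by simp qed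
        show "m0 \<noteq> Suc 0" proof assume "m0 = Suc 0" then show False using m0 by simp qed
      qed
      consider "m0 = 0" | "m0 = Suc 0" | t where "m0 = Suc (Suc t)"
        by (metis not0_implies_Suc)
      then obtain t where t: "m0 = Suc (Suc t)" using m01 by metis
      have lt: "length (pal \<psi> (Suc t)) \<le> a" using m0min[of "Suc t"] t by simp
      have "length (pal \<psi> m0) \<in> ?S" using pal_prefix_pal[OF adm, of m0] ww by simp
      then obtain n where n: "e n = length (pal \<psi> m0)"
        using enumerate_Ex[OF assms] unfolding e_def by blast
      have "i < n" using n m0 mono_iff[of i n] unfolding a_def by simp
      then have "Suc i \<le> n" by simp
      then have "e (Suc i) \<le> e n" using mono_iff[of n "Suc i"] by auto
      also have "\<dots> \<le> 2 * length (pal \<psi> (Suc t)) + 1" using n t len_bound by simp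
      also have "\<dots> \<le> 2 * e i + 1" using lt a_def by simp
      finally show "enumerate ?S (Suc i) \<le> 2 * enumerate ?S i + 1" unfolding e_def .
    qed
  } note D2 = this
  show ?thesis
  proof (rule iffI)
    assume "\<forall>i. enumerate ?S (Suc i) \<le> 2 * enumerate ?S i + 1"
    then show "\<exists>\<psi> :: nat \<Rightarrow> nat + 'a. admissible \<psi> \<and> w = w_psi \<psi>" by (rule D1)
  next
    assume "\<exists>\<psi> :: nat \<Rightarrow> nat + 'a. admissible \<psi> \<and> w = w_psi \<psi>"
    then show "\<forall>i. enumerate ?S (Suc i) \<le> 2 * enumerate ?S i + 1" by (rule D2)
  qed
qed


end
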